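(* Let $\mathbb{K}$ be a field, $R=\mathbb{K}[X_1,\ldots,X_n]$, $J\subsetneq I\subset R$ monomial ideals. Let $I'$ and $J'$ be the monomial ideals in $\mathbb{K}[X_1,\ldots,X_n,X_{n+1}]$ obtained from $I$ and $J$ by replacing, in each minimal generator of $I$ and $J$, every occurrence of the variable $X_n$ by the product $X_nX_{n+1}$. Then $\operatorname{sdepth} I'/J'=\operatorname{sdepth} I/J+1$.
   Context: Stanley depth: with the fine multigrading, a Stanley decomposition of a finitely generated multigraded module $M$ is a finite family $(\mathbb{K}[Z_i], m_i)$ with $m_i$ homogeneous, $Z_i$ subsets of the variables, $m_i\mathbb{K}[Z_i]$ free over $\mathbb{K}[Z_i]$, and $M=\bigoplus_i m_i\mathbb{K}[Z_i]$ as multigraded $\mathbb{K}$-vector spaces; its depth is $\min_i|Z_i|$, and $\operatorname{sdepth}M$ is the maximal depth of a Stanley decomposition. *)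

theory Defs
  imports Main
begin

text \<open>Monomials of K[X_1..X_n] are encoded as exponent vectors nat => nat supported on
  {0..<n} (variable X_(i+1) has index i). A monomial ideal is encoded by its set of
  monomials (which is a K-basis of it); the fine multigraded structure of I/J has
  K-basis the monomials in I - J, each multidegree component being one-dimensional.\<close>

type_synonym mon = "nat \<Rightarrow> nat"

definition monoms :: "nat \<Rightarrow> mon set" where
  "monoms n = {a. \<forall>i\<ge>n. a i = 0}"

definition mon_ideal :: "nat \<Rightarrow> mon set \<Rightarrow> bool" where
  "mon_ideal n I \<longleftrightarrow> I \<subseteq> monoms n \<and> (\<forall>a\<in>I. \<forall>b\<in>monoms n. (\<lambda>i. a i + b i) \<in> I)"

definition min_gens :: "mon set \<Rightarrow> mon set" where
  "min_gens I = {a\<in>I. \<forall>b\<in>I. (\<forall>i. b i \<le> a i) \<longrightarrow> b = a}"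

definition gen_ideal :: "nat \<Rightarrow> mon set \<Rightarrow> mon set" where
  "gen_ideal n S = {w\<in>monoms n. \<exists>a\<in>S. \<forall>i. a i \<le> w i}"

text \<open>Replace X_n by X_n X_(n+1): the exponent of new variable (index n) equals
  that of X_n (index n-1).\<close>
definition subst_last :: "nat \<Rightarrow> mon \<Rightarrow> mon" where
  "subst_last n a = a(n := a (n - 1))"

definition lift_ideal :: "nat \<Rightarrow> mon set \<Rightarrow> mon set" where
  "lift_ideal n I = gen_ideal (Suc n) (subst_last n ` min_gens I)"

definition cone :: "mon \<Rightarrow> nat set \<Rightarrow> mon set" where
  "cone u Z = {w. (\<forall>i. u i \<le> w i) \<and> (\<forall>i. i \<notin> Z \<longrightarrow> w i = u i)}"

text \<open>Stanley decomposition of I/J: finite family of pairs (u,Z), u a monomial of I/J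
  (nonzero homogeneous element), u K[Z] free (no monomial u*v, v in K[Z], lies in J),
  and I/J the direct sum of the u K[Z] as multigraded vector spaces.\<close>
definition stanley_decomp :: "nat \<Rightarrow> mon set \<Rightarrow> mon set \<Rightarrow> (mon \<times> nat set) set \<Rightarrow> bool" where
  "stanley_decomp n I J D \<longleftrightarrow> finite D \<and>
     (\<forall>(u, Z)\<in>D. Z \<subseteq> {..<n} \<and> u \<in> monoms n \<and> u \<in> I \<and> u \<notin> J \<and> cone u Z \<inter> J = {}) \<and>
     (\<forall>p\<in>D. \<forall>q\<in>D. p \<noteq> q \<longrightarrow> cone (fst p) (snd p) \<inter> cone (fst q) (snd q) = {}) \<and>
     (\<Union>(u, Z)\<in>D. cone u Z) = I - J"

definition sdecomp_depth :: "(mon \<times> nat set) set \<Rightarrow> nat" where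
  "sdecomp_depth D = Min ((\<lambda>(u, Z). card Z) ` D)"

definition sdepth :: "nat \<Rightarrow> mon set \<Rightarrow> mon set \<Rightarrow> nat" where
  "sdepth n I J = Max {sdecomp_depth D | D. stanley_decomp n I J D}"

end

theory Submission
  imports Defs
begin

definition trunc :: "nat \<Rightarrow> mon \<Rightarrow> mon" where "trunc M w = (\<lambda>i. min (w i) M)"
definition upc :: "nat \<Rightarrow> mon set \<Rightarrow> bool" where
  "upc n U \<longleftrightarrow> U \<subseteq> monoms n \<and> (\<forall>a\<in>U. \<forall>b\<in>monoms n. (\<forall>i. a i \<le> b i) \<longrightarrow> b \<in> U)"
definition tdet :: "nat \<Rightarrow> mon set \<Rightarrow> nat \<Rightarrow> bool" where
  "tdet n U M \<longleftrightarrow> (\<forall>w\<in>monoms n. w \<in> U \<longleftrightarrow> trunc M w \<in> U)"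

lemma trunc_monoms: "w \<in> monoms n \<Longrightarrow> trunc M w \<in> monoms n"
  by (auto simp: monoms_def trunc_def)

lemma trunc_trunc: "M \<le> M' \<Longrightarrow> trunc M (trunc M' w) = trunc M w"
  by (auto simp: trunc_def min_def)

lemma tdet_mono: "tdet n U M \<Longrightarrow> M \<le> M' \<Longrightarrow> tdet n U M'"
  unfolding tdet_def by (metis trunc_monoms trunc_trunc)

lemma finite_box: "finite {t \<in> monoms n. \<forall>i. t i \<le> M}"
proof -
  have "{t \<in> monoms n. \<forall>i. t i \<le> M} \<subseteq> {f. \<forall>x. (x \<in> {..<n} \<longrightarrow> f x \<in> {..M}) \<and> (x \<notin> {..<n} \<longrightarrow> f x = 0)}"
    by (auto simp: monoms_def)
  then show ?thesis by (rule finite_subset) (rule finite_set_of_finite_funs, auto)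
qed

lemma trunc_exists: "upc n U \<Longrightarrow> \<exists>M. tdet n U M"
proof (induction n arbitrary: U)
  case 0
  have "tdet 0 U 0" unfolding tdet_def
  proof
    fix w assume "w \<in> monoms 0"
    then have "trunc 0 w = w" by (auto simp: monoms_def trunc_def)
    then show "(w \<in> U) = (trunc 0 w \<in> U)" by simp
  qed
  then show ?case by blast
next
  case (Suc n)
  define slice where "slice k = {a \<in> monoms n. a(n := k) \<in> U}" for k
  have upU: "U \<subseteq> monoms (Suc n)" "\<And>a b. a \<in> U \<Longrightarrow> b \<in> monoms (Suc n) \<Longrightarrow> (\<forall>i. a i \<le> b i) \<Longrightarrow> b \<in> U"
    using Suc.prems by (auto simp: upc_def)
  have upd_monoms: "a \<in> monoms n \<Longrightarrow> a(n := k) \<in> monoms (Suc n)" for a k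
    by (auto simp: monoms_def)
  have slice_up: "upc n (slice k)" for k
    unfolding upc_def slice_def
  proof (intro conjI ballI impI)
    fix a b assume a: "a \<in> {a \<in> monoms n. a(n := k) \<in> U}" and b: "b \<in> monoms n" and le: "\<forall>i. a i \<le> b i"
    have "b(n := k) \<in> U" using upU(2)[of "a(n:=k)" "b(n:=k)"] a b le upd_monoms by auto
    then show "b \<in> {a \<in> monoms n. a(n := k) \<in> U}" using b by auto
  qed auto
  have slice_mono: "k \<le> k' \<Longrightarrow> slice k \<subseteq> slice k'" for k k'
  proof
    fix a assume "k \<le> k'" "a \<in> slice k"
    then show "a \<in> slice k'" unfolding slice_def
      using upU(2)[of "a(n:=k)" "a(n:=k')"] upd_monoms by auto
  qed
  define Uinf where "Uinf = {a \<in> monoms n. \<exists>k. a \<in> slice k}"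
  have "upc n Uinf"
    using slice_up unfolding upc_def Uinf_def by blast
  then obtain Minf where Minf: "tdet n Uinf Minf" using Suc.IH by blast
  have "\<forall>k. \<exists>M. tdet n (slice k) M" using Suc.IH slice_up by blast
  then obtain Mf where Mf: "\<And>k. tdet n (slice k) (Mf k)" by metis
  define B where "B = {t \<in> monoms n. \<forall>i. t i \<le> Minf} \<inter> Uinf"
  have finB: "finite B" unfolding B_def using finite_box by blast
  have "\<forall>t\<in>B. \<exists>k. t \<in> slice k" unfolding B_def Uinf_def by blast
  then obtain kf where kf: "\<And>t. t \<in> B \<Longrightarrow> t \<in> slice (kf t)" by metis
  define K where "K = Max (insert 0 (kf ` B))"
  have kfK: "t \<in> B \<Longrightarrow> kf t \<le> K" for t unfolding K_def using finB by auto
  have sliceK: "K \<le> k \<Longrightarrow> slice k = Uinf" for k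
  proof
    assume Kk: "K \<le> k"
    show "slice k \<subseteq> Uinf" unfolding Uinf_def slice_def by auto
    show "Uinf \<subseteq> slice k"
    proof
      fix a assume a: "a \<in> Uinf"
      then have am: "a \<in> monoms n" unfolding Uinf_def by auto
      have tU: "trunc Minf a \<in> Uinf" using Minf a am unfolding tdet_def by blast
      have tB: "trunc Minf a \<in> B" unfolding B_def using tU trunc_monoms[OF am]
        by (auto simp: trunc_def)
      have "trunc Minf a \<in> slice k"
        using kf[OF tB] slice_mono[of "kf (trunc Minf a)" k] kfK[OF tB] Kk by auto
      then show "a \<in> slice k"
        using slice_up[of k] am unfolding upc_def by (auto simp: trunc_def)
    qed
  qed
  define M where "M = max (max K Minf) (Max (Mf ` {..K}))"
  have MK: "K \<le> M" "Minf \<le> M" unfolding M_def by auto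
  have Mfk: "k \<le> K \<Longrightarrow> Mf k \<le> M" for k unfolding M_def
    by (metis Max_ge atMost_iff finite_atMost finite_imageI image_eqI max.coboundedI2)
  have "tdet (Suc n) U M" unfolding tdet_def
  proof
    fix w assume w: "w \<in> monoms (Suc n)"
    define w' where "w' = w(n := 0)"
    define k where "k = w n"
    have w'm: "w' \<in> monoms n" using w unfolding w'_def monoms_def by auto
    have ww: "w = w'(n := k)" unfolding w'_def k_def by auto
    have tw: "trunc M w = (trunc M w')(n := min k M)"
      unfolding ww trunc_def by auto
    have e1: "(w \<in> U) = (w' \<in> slice k)" using w'm ww unfolding slice_def by auto
    have e2: "(trunc M w \<in> U) = (trunc M w' \<in> slice (min k M))"
      using trunc_monoms[OF w'm] tw unfolding slice_def by auto
    show "(w \<in> U) = (trunc M w \<in> U)"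
    proof (cases "k \<le> K")
      case True
      then have mk: "min k M = k" using MK by auto
      have "tdet n (slice k) M" using tdet_mono[OF Mf Mfk[OF True]] .
      then show ?thesis using e1 e2 mk w'm unfolding tdet_def by auto
    next
      case False
      then have "slice k = Uinf" "slice (min k M) = Uinf" using sliceK MK by auto
      moreover have "tdet n Uinf M" using tdet_mono[OF Minf MK(2)] .
      ultimately show ?thesis using e1 e2 w'm unfolding tdet_def by auto
    qed
  qed
  then show ?case by blast
qed

lemma mon_ideal_upc:
  assumes "mon_ideal n I" shows "upc n I"
proof -
  have h1: "I \<subseteq> monoms n" and h2: "\<And>a b. a \<in> I \<Longrightarrow> b \<in> monoms n \<Longrightarrow> (\<lambda>i. a i + b i) \<in> I"
    using assms unfolding mon_ideal_def by blast+
  { fix a b assume a: "a \<in> I" "b \<in> monoms n" "\<forall>i. a i \<le> b i"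
    have "(\<lambda>i. b i - a i) \<in> monoms n" using a(2) by (auto simp: monoms_def)
    from h2[OF a(1) this] have "(\<lambda>i. a i + (b i - a i)) \<in> I" .
    moreover have "(\<lambda>i. a i + (b i - a i)) = b" using a(3) by (auto simp: fun_eq_iff)
    ultimately have "b \<in> I" by simp }
  then show ?thesis using h1 unfolding upc_def by blast
qed

lemma cone_fiber:
  assumes "t \<in> monoms n" "\<forall>i. t i \<le> M"
  shows "cone t {i. i < n \<and> t i = M} = {w \<in> monoms n. trunc M w = t}"
proof
  show "cone t {i. i < n \<and> t i = M} \<subseteq> {w \<in> monoms n. trunc M w = t}"
  proof
    fix w assume w: "w \<in> cone t {i. i < n \<and> t i = M}"
    have "w \<in> monoms n" using w assms(1) by (auto simp: cone_def monoms_def)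
    moreover have "trunc M w i = t i" for i
    proof -
      have le: "t i \<le> w i" and eq: "\<not> (i < n \<and> t i = M) \<Longrightarrow> w i = t i"
        using w by (auto simp: cone_def)
      show ?thesis
      proof (cases "i < n \<and> t i = M")
        case True then show ?thesis using le by (simp add: trunc_def)
      next
        case False then show ?thesis using eq assms(2) by (simp add: trunc_def)
      qed
    qed
    ultimately show "w \<in> {w \<in> monoms n. trunc M w = t}" by (auto simp: fun_eq_iff)
  qed
  show "{w \<in> monoms n. trunc M w = t} \<subseteq> cone t {i. i < n \<and> t i = M}"
  proof
    fix w assume w: "w \<in> {w \<in> monoms n. trunc M w = t}"
    then have wm: "w \<in> monoms n" and tw: "\<And>i. min (w i) M = t i" by (auto simp: trunc_def)
    have "t i \<le> w i" for i using tw[of i] by (metis min.cobounded1)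
    moreover have "w i = t i" if "\<not> (i < n \<and> t i = M)" for i
    proof (cases "i < n")
      case True then show ?thesis using that tw[of i] by (auto simp: min_def split: if_splits)
    next
      case False then show ?thesis using wm assms(1) by (auto simp: monoms_def)
    qed
    ultimately show "w \<in> cone t {i. i < n \<and> t i = M}" by (auto simp: cone_def)
  qed
qed

lemma tdetD: "tdet n U M \<Longrightarrow> w \<in> monoms n \<Longrightarrow> (w \<in> U) = (trunc M w \<in> U)"
  unfolding tdet_def by blast

lemma exists_decomp:
  assumes "mon_ideal n I" "mon_ideal n J"
  shows "\<exists>D. stanley_decomp n I J D"
proof -
  obtain MI where MI: "tdet n I MI" using trunc_exists mon_ideal_upc assms(1) by blast
  obtain MJ where MJ: "tdet n J MJ" using trunc_exists mon_ideal_upc assms(2) by blast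
  define M where "M = max MI MJ"
  have tI: "tdet n I M" "tdet n J M" using tdet_mono MI MJ unfolding M_def by auto
  define T where "T = {t \<in> monoms n. \<forall>i. t i \<le> M} \<inter> (I - J)"
  define D where "D = (\<lambda>t. (t, {i. i < n \<and> t i = M})) ` T"
  have Im: "I \<subseteq> monoms n" using assms(1) by (auto simp: mon_ideal_def)
  have fib: "(u, Z) \<in> D \<Longrightarrow> cone u Z = {w \<in> monoms n. trunc M w = u} \<and> u \<in> T" for u Z
  proof -
    assume "(u, Z) \<in> D"
    then have uT: "u \<in> T" and Z: "Z = {i. i < n \<and> u i = M}" unfolding D_def by auto
    have "u \<in> monoms n" "\<forall>i. u i \<le> M" using uT unfolding T_def by auto
    then show ?thesis using cone_fiber[of u n M] uT Z by simp
  qed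
  have "stanley_decomp n I J D"
    unfolding stanley_decomp_def
  proof (intro conjI ballI impI)
    show "finite D" unfolding D_def T_def by (intro finite_imageI finite_Int disjI1 finite_box)
  next
    fix p assume "p \<in> D"
    then obtain u Z where p: "p = (u, Z)" "(u, Z) \<in> D" by (cases p) auto
    then have Z: "Z = {i. i < n \<and> u i = M}" unfolding D_def by auto
    have fu: "cone u Z = {w \<in> monoms n. trunc M w = u}" "u \<in> T" using fib[OF p(2)] by auto
    have "cone u Z \<inter> J = {}"
    proof -
      { fix w assume "w \<in> monoms n" "trunc M w = u" "w \<in> J"
        then have "u \<in> J" using tdetD[OF tI(2)] by blast
        then have False using fu(2) unfolding T_def by auto }
      then show ?thesis using fu(1) by auto
    qed
    moreover have "Z \<subseteq> {..<n}" using Z by auto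
    moreover have "u \<in> monoms n" "u \<in> I" "u \<notin> J" using fu(2) unfolding T_def by auto
    ultimately show "case p of (u, Z) \<Rightarrow> Z \<subseteq> {..<n} \<and> u \<in> monoms n \<and> u \<in> I \<and> u \<notin> J \<and> cone u Z \<inter> J = {}"
      unfolding p(1) by simp
  next
    fix p q assume pq: "p \<in> D" "q \<in> D" "p \<noteq> q"
    obtain u Z where p: "p = (u, Z)" by (cases p)
    obtain v Y where q: "q = (v, Y)" by (cases q)
    have pD: "(u, Z) \<in> D" and qD: "(v, Y) \<in> D" using pq p q by auto
    have "u \<noteq> v" using pq(3) pD qD unfolding p q D_def by auto
    then have "{w \<in> monoms n. trunc M w = u} \<inter> {w \<in> monoms n. trunc M w = v} = {}" by auto
    then show "cone (fst p) (snd p) \<inter> cone (fst q) (snd q) = {}"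
      using fib[OF pD] fib[OF qD] unfolding p q by simp
  next
    show "(\<Union>(u, Z)\<in>D. cone u Z) = I - J"
    proof
      show "(\<Union>(u, Z)\<in>D. cone u Z) \<subseteq> I - J"
      proof safe
        fix u Z w assume uZ: "(u, Z) \<in> D" "w \<in> cone u Z"
        then have w: "w \<in> monoms n" "trunc M w = u" "u \<in> T" using fib[OF uZ(1)] by auto
        then show "w \<in> I" using tdetD[OF tI(1) w(1)] unfolding T_def by blast
        assume "w \<in> J" then show False using tdetD[OF tI(2) w(1)] w unfolding T_def by blast
      qed
      show "I - J \<subseteq> (\<Union>(u, Z)\<in>D. cone u Z)"
      proof
        fix w assume w: "w \<in> I - J"
        then have wm: "w \<in> monoms n" using Im by auto
        define t where "t = trunc M w"
        have "t \<in> I - J" using w tdetD[OF tI(1) wm] tdetD[OF tI(2) wm] unfolding t_def by blast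
        moreover have "\<forall>i. t i \<le> M" unfolding t_def trunc_def by auto
        ultimately have tT: "t \<in> T" using trunc_monoms[OF wm] unfolding T_def t_def by blast
        have "(t, {i. i < n \<and> t i = M}) \<in> D" using tT unfolding D_def by auto
        moreover have "w \<in> cone t {i. i < n \<and> t i = M}" using fib[OF calculation] wm t_def by auto
        ultimately show "w \<in> (\<Union>(u, Z)\<in>D. cone u Z)" by blast
      qed
    qed
  qed
  then show ?thesis by blast
qed

definition psi :: "nat \<Rightarrow> mon \<Rightarrow> mon" where
  "psi n w = (\<lambda>i. if i < n - 1 then w i else if i = n - 1 then min (w (n - 1)) (w n) else 0)"

lemma all_split:
  fixes n :: nat
  assumes "n \<ge> 1"
  shows "(\<forall>i. P i) \<longleftrightarrow> (\<forall>i<n-1. P i) \<and> P (n-1) \<and> P n \<and> (\<forall>i>n. P i)"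
proof
  assume h: "(\<forall>i<n-1. P i) \<and> P (n-1) \<and> P n \<and> (\<forall>i>n. P i)"
  show "\<forall>i. P i"
  proof
    fix i
    have "i < n - 1 \<or> i = n - 1 \<or> i = n \<or> i > n" using assms by arith
    then show "P i" using h by auto
  qed
qed auto

lemma psi_monoms: "n \<ge> 1 \<Longrightarrow> psi n w \<in> monoms n"
  by (auto simp: psi_def monoms_def)

lemma subst_last_monoms: "n \<ge> 1 \<Longrightarrow> w \<in> monoms n \<Longrightarrow> subst_last n w \<in> monoms (Suc n)"
  by (auto simp: subst_last_def monoms_def)

lemma psi_subst_last: "n \<ge> 1 \<Longrightarrow> w \<in> monoms n \<Longrightarrow> psi n (subst_last n w) = w"
  by (auto simp: psi_def subst_last_def monoms_def fun_eq_iff)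

lemma min_gen_below:
  assumes "mon_ideal n I" "a \<in> I"
  shows "\<exists>g\<in>min_gens I. \<forall>i. g i \<le> a i"
proof -
  have Im: "I \<subseteq> monoms n" using assms(1) by (auto simp: mon_ideal_def)
  let ?P = "\<lambda>b. b \<in> I \<and> (\<forall>i. b i \<le> a i)"
  obtain g where g: "?P g" and gmin: "\<And>c. ?P c \<Longrightarrow> sum g {..<n} \<le> sum c {..<n}"
    using ex_has_least_nat[of ?P a "\<lambda>b. sum b {..<n}"] assms(2) by auto
  have "g \<in> min_gens I"
    unfolding min_gens_def
  proof (intro CollectI conjI ballI impI)
    show "g \<in> I" using g by auto
    fix c assume c: "c \<in> I" "\<forall>i. c i \<le> g i"
    have "?P c" using c g le_trans by blast
    then have s: "sum g {..<n} \<le> sum c {..<n}" by (rule gmin)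
    show "c = g"
    proof (rule ccontr)
      assume "c \<noteq> g"
      then obtain i where i: "c i \<noteq> g i" by (auto simp: fun_eq_iff)
      have "i < n"
      proof (rule ccontr)
        assume "\<not> i < n"
        then have "c i = 0" "g i = 0" using c(1) g Im by (auto simp: monoms_def)
        then show False using i by simp
      qed
      then have "sum c {..<n} < sum g {..<n}"
        using c(2) i by (intro sum_strict_mono_ex1) (auto intro!: bexI[of _ i] simp: le_neq_implies_less)
      then show False using s by simp
    qed
  qed
  then show ?thesis using g by blast
qed

lemma lift_char:
  assumes "n \<ge> 1" "mon_ideal n I"
  shows "lift_ideal n I = {w \<in> monoms (Suc n). psi n w \<in> I}"
proof
  have Im: "I \<subseteq> monoms n" using assms(2) by (auto simp: mon_ideal_def)
  have up: "upc n I" using assms(2) by (rule mon_ideal_upc)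
  show "lift_ideal n I \<subseteq> {w \<in> monoms (Suc n). psi n w \<in> I}"
  proof
    fix w assume "w \<in> lift_ideal n I"
    then obtain g where w: "w \<in> monoms (Suc n)" and g: "g \<in> min_gens I"
      and le: "\<forall>i. subst_last n g i \<le> w i"
      unfolding lift_ideal_def gen_ideal_def by auto
    have gI: "g \<in> I" using g by (auto simp: min_gens_def)
    then have gm: "g \<in> monoms n" using Im by auto
    have "g i \<le> psi n w i" for i
    proof -
      have sl: "subst_last n g i = (if i = n then g (n-1) else g i)" for i by (simp add: subst_last_def)
      consider "i < n - 1" | "i = n - 1" | "i \<ge> n" using assms(1) by linarith
      then show ?thesis
      proof cases
        case 1 then have "i \<noteq> n" by linarith
        then show ?thesis using 1 le[rule_format, of i] sl[of i] by (simp add: psi_def)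
      next
        case 2
        have "g (n-1) \<le> w (n-1)" "g (n-1) \<le> w n" using le[rule_format, of "n-1"] le[rule_format, of n] sl[of "n-1"] sl[of n] assms(1) by auto
        then show ?thesis using 2 by (simp add: psi_def)
      next
        case 3 then have "g i = 0" using gm by (simp add: monoms_def)
        then show ?thesis by simp
      qed
    qed
    then have "\<forall>i. g i \<le> psi n w i" by blast
    then have "psi n w \<in> I" using up gI psi_monoms[OF assms(1)] unfolding upc_def by blast
    then show "w \<in> {w \<in> monoms (Suc n). psi n w \<in> I}" using w by auto
  qed
  show "{w \<in> monoms (Suc n). psi n w \<in> I} \<subseteq> lift_ideal n I"
  proof
    fix w assume w: "w \<in> {w \<in> monoms (Suc n). psi n w \<in> I}"
    then obtain g where g: "g \<in> min_gens I" and le: "\<forall>i. g i \<le> psi n w i"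
      using min_gen_below[OF assms(2)] by blast
    have gm: "g \<in> monoms n" using g Im by (auto simp: min_gens_def)
    have "subst_last n g i \<le> w i" for i
    proof -
      have ps: "psi n w (n-1) = min (w (n-1)) (w n)" by (simp add: psi_def)
      consider "i < n - 1" | "i = n - 1" | "i = n" | "i > n" using assms(1) by linarith
      then show ?thesis
      proof cases
        case 1 then have "i \<noteq> n" by linarith
        then show ?thesis using 1 le[rule_format, of i] by (simp add: psi_def subst_last_def)
      next
        case 2 then have "i \<noteq> n" using assms(1) by simp
        then show ?thesis using 2 le[rule_format, of "n-1"] ps by (simp add: subst_last_def)
      next
        case 3 then show ?thesis using le[rule_format, of "n-1"] ps by (simp add: subst_last_def)
      next
        case 4 then have "g i = 0" using gm by (simp add: monoms_def)
        then show ?thesis using 4 by (simp add: subst_last_def)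
      qed
    qed
    then have "\<forall>i. subst_last n g i \<le> w i" by blast
    then show "w \<in> lift_ideal n I" using w g unfolding lift_ideal_def gen_ideal_def by auto
  qed
qed

lemma cone_iff: "x \<in> cone v Y \<longleftrightarrow> (\<forall>i. v i \<le> x i \<and> (i \<notin> Y \<longrightarrow> x i = v i))"
  unfolding cone_def by blast

lemma cone_self: "v \<in> cone v Y" by (simp add: cone_def)

lemma cone_monoms: "v \<in> monoms m \<Longrightarrow> Y \<subseteq> {..<m} \<Longrightarrow> cone v Y \<subseteq> monoms m"
proof
  fix x assume v: "v \<in> monoms m" and Y: "Y \<subseteq> {..<m}" and x: "x \<in> cone v Y"
  show "x \<in> monoms m" unfolding monoms_def
  proof (intro CollectI allI impI)
    fix i assume "m \<le> i"
    then have "i \<notin> Y" "v i = 0" using Y v by (auto simp: monoms_def)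
    then show "x i = 0" using x by (simp add: cone_def)
  qed
qed

lemma psi_lt: "i < n - 1 \<Longrightarrow> psi n w i = w i" by (simp add: psi_def)
lemma psi_at: "psi n w (n - 1) = min (w (n - 1)) (w n)" by (simp add: psi_def)
lemma psi_at': "psi n w (n - Suc 0) = min (w (n - Suc 0)) (w n)" by (simp add: psi_def)
lemma psi_gt: "n \<ge> 1 \<Longrightarrow> i \<ge> n \<Longrightarrow> psi n w i = 0"
proof -
  assume "n \<ge> 1" "i \<ge> n"
  then have "\<not> i < n - 1" "i \<noteq> n - 1" by linarith+
  then show ?thesis by (simp add: psi_def)
qed
lemma sl_ne: "i \<noteq> n \<Longrightarrow> subst_last n w i = w i" by (simp add: subst_last_def)
lemma sl_at: "subst_last n w n = w (n - 1)" by (simp add: subst_last_def)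

definition F :: "nat \<Rightarrow> mon \<Rightarrow> nat set \<Rightarrow> (mon \<times> nat set) set" where
  "F n u Z = (if n - 1 \<in> Z then {(subst_last n u, insert n Z)}
     else {(subst_last n u, insert n Z), ((subst_last n u)(n - 1 := Suc (u (n - 1))), insert (n - 1) Z)})"

lemma pre_cone:
  assumes n: "n \<ge> 1" and u: "u \<in> monoms n" and Z: "Z \<subseteq> {..<n}" and w: "w \<in> monoms (Suc n)"
  shows "psi n w \<in> cone u Z \<longleftrightarrow> (\<exists>(v, Y)\<in>F n u Z. w \<in> cone v Y)"
proof -
  have nZ: "n \<notin> Z" "\<And>i. i > n \<Longrightarrow> i \<notin> Z" using Z by auto
  have u0: "u n = 0" "\<And>i. i > n \<Longrightarrow> u i = 0" using u by (auto simp: monoms_def)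
  have w0: "\<And>i. i > n \<Longrightarrow> w i = 0" using w by (auto simp: monoms_def)
  have nn: "n - 1 \<noteq> n" "n - 1 < n" using n by auto
  have lt: "i < n - 1 \<Longrightarrow> i \<noteq> n \<and> i \<noteq> n - 1" for i by linarith
  have gt: "i > n \<Longrightarrow> i \<noteq> n \<and> i \<noteq> n - 1 \<and> i \<ge> n" for i by linarith
  let ?Q = "\<forall>i<n-1. u i \<le> w i \<and> (i \<notin> Z \<longrightarrow> w i = u i)"
  have L: "psi n w \<in> cone u Z \<longleftrightarrow> ?Q
      \<and> (u (n-1) \<le> min (w (n-1)) (w n) \<and> (n - 1 \<notin> Z \<longrightarrow> min (w (n-1)) (w n) = u (n-1)))"
    unfolding cone_iff all_split[OF n, of "\<lambda>i. u i \<le> psi n w i \<and> (i \<notin> Z \<longrightarrow> psi n w i = u i)"]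
    using nZ u0 nn n by (simp add: psi_lt psi_at psi_at' psi_gt)
  have R1: "w \<in> cone (subst_last n u) (insert n Z) \<longleftrightarrow> ?Q
      \<and> (u (n-1) \<le> w (n-1) \<and> (n - 1 \<notin> Z \<longrightarrow> w (n-1) = u (n-1))) \<and> u (n-1) \<le> w n"
    unfolding cone_iff all_split[OF n, of "\<lambda>i. subst_last n u i \<le> w i \<and> (i \<notin> insert n Z \<longrightarrow> w i = subst_last n u i)"]
    using nZ u0 nn w0 lt gt by (simp add: sl_ne sl_at)
  have R2: "w \<in> cone ((subst_last n u)(n - 1 := Suc (u (n - 1)))) (insert (n - 1) Z) \<longleftrightarrow> ?Q
      \<and> Suc (u (n-1)) \<le> w (n-1) \<and> (u (n-1) \<le> w n \<and> w n = u (n-1))"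
    unfolding cone_iff all_split[OF n, of "\<lambda>i. ((subst_last n u)(n - 1 := Suc (u (n - 1)))) i \<le> w i \<and> (i \<notin> insert (n - 1) Z \<longrightarrow> w i = ((subst_last n u)(n - 1 := Suc (u (n - 1)))) i)"]
    using nZ u0 nn w0 lt gt by (simp add: sl_ne sl_at)
  show ?thesis
  proof (cases "n - 1 \<in> Z")
    case True
    then show ?thesis unfolding L F_def using R1 by simp
  next
    case False
    then show ?thesis unfolding L F_def using R1 R2 by (auto simp: min_def)
  qed
qed

definition pcond :: "nat \<Rightarrow> mon \<Rightarrow> nat set \<Rightarrow> bool" where
  "pcond n v Y \<longleftrightarrow> (n \<in> Y \<or> v (n-1) \<le> v n) \<and> (n - 1 \<in> Y \<or> v n \<le> v (n-1))"

definition proj :: "nat \<Rightarrow> mon \<Rightarrow> nat set \<Rightarrow> mon \<times> nat set" where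
  "proj n v Y = ((\<lambda>i. if i < n - 1 then v i else if i = n - 1 then max (v (n-1)) (v n) else 0),
     if n - 1 \<in> Y \<and> n \<in> Y then Y - {n} else Y - {n - 1, n})"

lemma proj_cone:
  assumes n: "n \<ge> 1" and v: "v \<in> monoms (Suc n)" and Y: "Y \<subseteq> {..<Suc n}" and w: "w \<in> monoms n"
  shows "subst_last n w \<in> cone v Y \<longleftrightarrow> pcond n v Y \<and> w \<in> cone (fst (proj n v Y)) (snd (proj n v Y))"
proof -
  have Yn: "\<And>i. i > n \<Longrightarrow> i \<notin> Y" using Y by auto
  have v0: "\<And>i. i > n \<Longrightarrow> v i = 0" using v by (auto simp: monoms_def)
  have w0: "w n = 0" "\<And>i. i > n \<Longrightarrow> w i = 0" using w by (auto simp: monoms_def)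
  have nn: "n - 1 \<noteq> n" "n - 1 < n" using n by auto
  have lt: "i < n - 1 \<Longrightarrow> i \<noteq> n \<and> i \<noteq> n - 1" for i by linarith
  have gt: "i > n \<Longrightarrow> i \<noteq> n \<and> i \<noteq> n - 1 \<and> \<not> i < n - 1" for i by linarith
  have L: "subst_last n w \<in> cone v Y \<longleftrightarrow> (\<forall>i<n-1. v i \<le> w i \<and> (i \<notin> Y \<longrightarrow> w i = v i))
     \<and> v (n-1) \<le> w (n-1) \<and> (n - 1 \<notin> Y \<longrightarrow> w (n-1) = v (n-1))
     \<and> v n \<le> w (n-1) \<and> (n \<notin> Y \<longrightarrow> w (n-1) = v n)"
    unfolding cone_iff all_split[OF n, of "\<lambda>i. v i \<le> subst_last n w i \<and> (i \<notin> Y \<longrightarrow> subst_last n w i = v i)"]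
    using Yn v0 nn w0 lt gt by (simp add: sl_ne sl_at)
  have R: "w \<in> cone (fst (proj n v Y)) (snd (proj n v Y)) \<longleftrightarrow> (\<forall>i<n-1. v i \<le> w i \<and> (i \<notin> Y \<longrightarrow> w i = v i))
     \<and> max (v (n-1)) (v n) \<le> w (n-1) \<and> (\<not> (n - 1 \<in> Y \<and> n \<in> Y) \<longrightarrow> w (n-1) = max (v (n-1)) (v n))"
    unfolding cone_iff proj_def fst_conv snd_conv all_split[OF n, of "\<lambda>i. (if i < n - 1 then v i else if i = n - 1 then max (v (n-1)) (v n) else 0) \<le> w i \<and> (i \<notin> (if n - 1 \<in> Y \<and> n \<in> Y then Y - {n} else Y - {n - 1, n}) \<longrightarrow> w i = (if i < n - 1 then v i else if i = n - 1 then max (v (n-1)) (v n) else 0))"]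
    using Yn v0 nn w0 lt gt by simp
  show ?thesis unfolding L R pcond_def by (auto simp: max_def)
qed

lemma F_finite: "finite (F n u Z)" by (simp add: F_def)

lemma F_props:
  assumes n: "n \<ge> 1" and u: "u \<in> monoms n" and Z: "Z \<subseteq> {..<n}" and p: "(v, Y) \<in> F n u Z"
  shows "Y \<subseteq> {..<Suc n}" "v \<in> monoms (Suc n)" "card Y = Suc (card Z)"
    "cone v Y \<subseteq> {w \<in> monoms (Suc n). psi n w \<in> cone u Z}"
proof -
  have nZ: "n \<notin> Z" using Z by auto
  have fZ: "finite Z" using Z finite_subset by blast
  show Y: "Y \<subseteq> {..<Suc n}" using p Z n unfolding F_def by (auto split: if_splits)
  show vm: "v \<in> monoms (Suc n)" using p u n unfolding F_def by (auto split: if_splits simp: monoms_def subst_last_def)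
  show "card Y = Suc (card Z)" using p nZ fZ unfolding F_def by (auto split: if_splits)
  show "cone v Y \<subseteq> {w \<in> monoms (Suc n). psi n w \<in> cone u Z}"
  proof
    fix w assume w: "w \<in> cone v Y"
    have wm: "w \<in> monoms (Suc n)" using cone_monoms[OF vm Y] w by blast
    have "psi n w \<in> cone u Z" using pre_cone[OF n u Z wm] w p by blast
    then show "w \<in> {w \<in> monoms (Suc n). psi n w \<in> cone u Z}" using wm by blast
  qed
qed

lemma F_disj:
  assumes n: "n \<ge> 1" and p: "p \<in> F n u Z" and q: "q \<in> F n u Z" and pq: "p \<noteq> q"
  shows "cone (fst p) (snd p) \<inter> cone (fst q) (snd q) = {}"
proof -
  have nZ: "n - 1 \<notin> Z" using p q pq unfolding F_def by (auto split: if_splits)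
  have nn: "n - 1 \<noteq> n" using n by auto
  have c1: "x \<in> cone (subst_last n u) (insert n Z) \<Longrightarrow> x (n-1) = u (n-1)" for x
    using nZ nn unfolding cone_iff subst_last_def by auto
  have c2: "x \<in> cone ((subst_last n u)(n - 1 := Suc (u (n - 1)))) (insert (n - 1) Z) \<Longrightarrow> x (n-1) \<ge> Suc (u (n-1))" for x
    unfolding cone_iff by (metis fun_upd_same)
  show ?thesis using p q pq nZ c1 c2 unfolding F_def by (auto; fastforce)
qed

lemma sdD:
  assumes "stanley_decomp m I J D"
  shows "finite D"
    "\<And>u Z. (u, Z) \<in> D \<Longrightarrow> Z \<subseteq> {..<m} \<and> u \<in> monoms m \<and> u \<in> I \<and> u \<notin> J \<and> cone u Z \<inter> J = {}"
    "\<And>p q. p \<in> D \<Longrightarrow> q \<in> D \<Longrightarrow> p \<noteq> q \<Longrightarrow> cone (fst p) (snd p) \<inter> cone (fst q) (snd q) = {}"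
    "(\<Union>(u, Z)\<in>D. cone u Z) = I - J"
proof -
  note S = assms[unfolded stanley_decomp_def]
  show "finite D" using S by blast
  show "(\<Union>(u, Z)\<in>D. cone u Z) = I - J" using S by blast
  show "\<And>p q. p \<in> D \<Longrightarrow> q \<in> D \<Longrightarrow> p \<noteq> q \<Longrightarrow> cone (fst p) (snd p) \<inter> cone (fst q) (snd q) = {}"
    using S by blast
  fix u Z assume "(u, Z) \<in> D"
  then show "Z \<subseteq> {..<m} \<and> u \<in> monoms m \<and> u \<in> I \<and> u \<notin> J \<and> cone u Z \<inter> J = {}"
    using S by fastforce
qed

lemma lift_decomp:
  assumes n: "n \<ge> 1" and I: "mon_ideal n I" and J: "mon_ideal n J" and D: "stanley_decomp n I J D"
  defines "D' \<equiv> (\<Union>(u, Z)\<in>D. F n u Z)"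
  shows "stanley_decomp (Suc n) (lift_ideal n I) (lift_ideal n J) D'"
    "\<forall>(v, Y)\<in>D'. \<exists>(u, Z)\<in>D. card Y = Suc (card Z)"
proof -
  have finD: "finite D" and Dp: "\<And>u Z. (u, Z) \<in> D \<Longrightarrow> Z \<subseteq> {..<n} \<and> u \<in> monoms n \<and> u \<in> I \<and> u \<notin> J \<and> cone u Z \<inter> J = {}"
    and Ddisj: "\<And>p q. p \<in> D \<Longrightarrow> q \<in> D \<Longrightarrow> p \<noteq> q \<Longrightarrow> cone (fst p) (snd p) \<inter> cone (fst q) (snd q) = {}"
    and Dun: "(\<Union>(u, Z)\<in>D. cone u Z) = I - J"
    using sdD[OF D] by blast+
  have LI: "lift_ideal n I = {w \<in> monoms (Suc n). psi n w \<in> I}" using lift_char[OF n I] .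
  have LJ: "lift_ideal n J = {w \<in> monoms (Suc n). psi n w \<in> J}" using lift_char[OF n J] .
  have inD': "\<exists>u Z. (u, Z) \<in> D \<and> (v, Y) \<in> F n u Z" if "(v, Y) \<in> D'" for v Y
    using that unfolding D'_def by auto
  have cone_sub: "cone u Z \<subseteq> I - J" if "(u, Z) \<in> D" for u Z
    using Dun that by blast
  show "\<forall>(v, Y)\<in>D'. \<exists>(u, Z)\<in>D. card Y = Suc (card Z)"
  proof (intro ballI, clarify)
    fix v Y assume "(v, Y) \<in> D'"
    then obtain u Z where uZ: "(u, Z) \<in> D" "(v, Y) \<in> F n u Z" using inD' by blast
    then show "\<exists>(u, Z)\<in>D. card Y = Suc (card Z)" using F_props(3)[OF n _ _ uZ(2)] Dp[OF uZ(1)] by blast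
  qed
  show "stanley_decomp (Suc n) (lift_ideal n I) (lift_ideal n J) D'"
    unfolding stanley_decomp_def
  proof (intro conjI ballI impI)
    show "finite D'" unfolding D'_def using finD F_finite by auto
  next
    fix p assume "p \<in> D'"
    then obtain v Y where p: "p = (v, Y)" "(v, Y) \<in> D'" by (cases p) auto
    then obtain u Z where uZ: "(u, Z) \<in> D" "(v, Y) \<in> F n u Z" using inD' by blast
    have uZp: "Z \<subseteq> {..<n}" "u \<in> monoms n" using Dp[OF uZ(1)] by auto
    note FP = F_props[OF n uZp(2) uZp(1) uZ(2)]
    have cs: "cone v Y \<subseteq> lift_ideal n I - lift_ideal n J"
      using FP(4) cone_sub[OF uZ(1)] unfolding LI LJ by blast
    have "v \<in> cone v Y" by (rule cone_self)
    then show "case p of (u, Z) \<Rightarrow> Z \<subseteq> {..<Suc n} \<and> u \<in> monoms (Suc n) \<and> u \<in> lift_ideal n I \<and> u \<notin> lift_ideal n J \<and> cone u Z \<inter> lift_ideal n J = {}"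
      unfolding p(1) using cs FP(1,2) by blast
  next
    fix p q assume pq: "p \<in> D'" "q \<in> D'" "p \<noteq> q"
    obtain v Y where p: "p = (v, Y)" by (cases p)
    obtain v' Y' where q: "q = (v', Y')" by (cases q)
    obtain u Z where uZ: "(u, Z) \<in> D" "(v, Y) \<in> F n u Z" using inD' pq(1) p by blast
    obtain u' Z' where uZ': "(u', Z') \<in> D" "(v', Y') \<in> F n u' Z'" using inD' pq(2) q by blast
    have uZp: "Z \<subseteq> {..<n}" "u \<in> monoms n" using Dp[OF uZ(1)] by auto
    have uZp': "Z' \<subseteq> {..<n}" "u' \<in> monoms n" using Dp[OF uZ'(1)] by auto
    show "cone (fst p) (snd p) \<inter> cone (fst q) (snd q) = {}"
    proof (cases "(u, Z) = (u', Z')")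
      case True
      then show ?thesis using F_disj[OF n, of p u Z q] uZ uZ' pq p q by auto
    next
      case False
      have "cone u Z \<inter> cone u' Z' = {}" using Ddisj[OF uZ(1) uZ'(1) False] by simp
      then show ?thesis using F_props(4)[OF n uZp(2) uZp(1) uZ(2)] F_props(4)[OF n uZp'(2) uZp'(1) uZ'(2)]
        unfolding p q by auto
    qed
  next
    show "(\<Union>(u, Z)\<in>D'. cone u Z) = lift_ideal n I - lift_ideal n J"
    proof
      show "(\<Union>(u, Z)\<in>D'. cone u Z) \<subseteq> lift_ideal n I - lift_ideal n J"
      proof (clarify)
        fix v Y w assume vY: "(v, Y) \<in> D'" and w: "w \<in> cone v Y"
        then obtain u Z where uZ: "(u, Z) \<in> D" "(v, Y) \<in> F n u Z" using inD' by blast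
        have uZp: "Z \<subseteq> {..<n}" "u \<in> monoms n" using Dp[OF uZ(1)] by auto
        show "w \<in> lift_ideal n I - lift_ideal n J"
          using F_props(4)[OF n uZp(2) uZp(1) uZ(2)] cone_sub[OF uZ(1)] w unfolding LI LJ by blast
      qed
      show "lift_ideal n I - lift_ideal n J \<subseteq> (\<Union>(u, Z)\<in>D'. cone u Z)"
      proof
        fix w assume w: "w \<in> lift_ideal n I - lift_ideal n J"
        then have wm: "w \<in> monoms (Suc n)" and pw: "psi n w \<in> I - J" unfolding LI LJ by auto
        then obtain u Z where uZ: "(u, Z) \<in> D" "psi n w \<in> cone u Z" using Dun by blast
        have uZp: "Z \<subseteq> {..<n}" "u \<in> monoms n" using Dp[OF uZ(1)] by auto
        obtain v Y where "(v, Y) \<in> F n u Z" "w \<in> cone v Y" using pre_cone[OF n uZp(2) uZp(1) wm] uZ(2) by blast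
        moreover then have "(v, Y) \<in> D'" using uZ(1) unfolding D'_def by blast
        ultimately show "w \<in> (\<Union>(u, Z)\<in>D'. cone u Z)" by blast
      qed
    qed
  qed
qed

lemma card_le_Suc_diff: "finite Y \<Longrightarrow> card Y \<le> Suc (card (Y - {x}))"
  by (cases "x \<in> Y") (simp_all add: card_Suc_Diff1)

lemma proj_props:
  assumes n: "n \<ge> 1" and Y: "Y \<subseteq> {..<Suc n}"
  shows "snd (proj n v Y) \<subseteq> {..<n}" "fst (proj n v Y) \<in> monoms n" "card Y \<le> Suc (card (snd (proj n v Y)))"
proof -
  show "snd (proj n v Y) \<subseteq> {..<n}" using Y unfolding proj_def by auto
  show "fst (proj n v Y) \<in> monoms n" using n unfolding proj_def monoms_def by auto
  have fY: "finite Y" using Y finite_subset by blast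
  show "card Y \<le> Suc (card (snd (proj n v Y)))"
  proof (cases "n - 1 \<in> Y \<and> n \<in> Y")
    case True
    then have "snd (proj n v Y) = Y - {n}" by (simp add: proj_def)
    then show ?thesis using card_le_Suc_diff[OF fY, of n] by simp
  next
    case False
    define x where "x = (if n - 1 \<in> Y then n - 1 else n)"
    have "Y - {n - 1, n} = Y - {x}" using False unfolding x_def by auto
    moreover have "snd (proj n v Y) = Y - {n - 1, n}" unfolding proj_def snd_conv if_not_P[OF False] ..
    ultimately have "snd (proj n v Y) = Y - {x}" by simp
    then show ?thesis using card_le_Suc_diff[OF fY, of x] by simp
  qed
qed

lemma proj_decomp:
  assumes n: "n \<ge> 1" and I: "mon_ideal n I" and J: "mon_ideal n J"
    and D': "stanley_decomp (Suc n) (lift_ideal n I) (lift_ideal n J) D'"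
  defines "D \<equiv> (\<lambda>(v, Y). proj n v Y) ` {(v, Y)\<in>D'. pcond n v Y}"
  shows "stanley_decomp n I J D"
    "\<forall>(u, Z)\<in>D. \<exists>(v, Y)\<in>D'. card Y \<le> Suc (card Z)"
proof -
  let ?I' = "lift_ideal n I" and ?J' = "lift_ideal n J"
  have finD: "finite D'" and Dp: "\<And>u Z. (u, Z) \<in> D' \<Longrightarrow> Z \<subseteq> {..<Suc n} \<and> u \<in> monoms (Suc n) \<and> u \<in> ?I' \<and> u \<notin> ?J' \<and> cone u Z \<inter> ?J' = {}"
    and Ddisj: "\<And>p q. p \<in> D' \<Longrightarrow> q \<in> D' \<Longrightarrow> p \<noteq> q \<Longrightarrow> cone (fst p) (snd p) \<inter> cone (fst q) (snd q) = {}"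
    and Dun: "(\<Union>(u, Z)\<in>D'. cone u Z) = ?I' - ?J'"
    using sdD[OF D'] by blast+
  have LI: "?I' = {w \<in> monoms (Suc n). psi n w \<in> I}" using lift_char[OF n I] .
  have LJ: "?J' = {w \<in> monoms (Suc n). psi n w \<in> J}" using lift_char[OF n J] .
  have Im: "I \<subseteq> monoms n" using I by (auto simp: mon_ideal_def)
  have phiIJ: "w \<in> monoms n \<Longrightarrow> (subst_last n w \<in> ?I' - ?J') = (w \<in> I - J)" for w
    unfolding LI LJ using psi_subst_last[OF n] subst_last_monoms[OF n] by auto
  have inD: "\<exists>v Y. (v, Y) \<in> D' \<and> pcond n v Y \<and> (u, Z) = proj n v Y" if "(u, Z) \<in> D" for u Z
    using that unfolding D_def by auto
  have key: "w \<in> cone u Z \<longleftrightarrow> w \<in> monoms n \<and> subst_last n w \<in> cone v Y"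
    if vY: "(v, Y) \<in> D'" "pcond n v Y" "(u, Z) = proj n v Y" for u Z v Y w
  proof -
    have Yp: "Y \<subseteq> {..<Suc n}" "v \<in> monoms (Suc n)" using Dp[OF vY(1)] by auto
    have uZ: "u = fst (proj n v Y)" "Z = snd (proj n v Y)" using vY(3)[symmetric] by simp_all
    have "u \<in> monoms n" "Z \<subseteq> {..<n}" using proj_props(1,2)[OF n Yp(1), of v] unfolding uZ by simp_all
    then have um: "cone u Z \<subseteq> monoms n" by (rule cone_monoms)
    show ?thesis using proj_cone[OF n Yp(2) Yp(1), of w] vY(2) uZ um by blast
  qed
  show "\<forall>(u, Z)\<in>D. \<exists>(v, Y)\<in>D'. card Y \<le> Suc (card Z)"
  proof (intro ballI, clarify)
    fix u Z assume "(u, Z) \<in> D"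
    then obtain v Y where vY: "(v, Y) \<in> D'" "(u, Z) = proj n v Y" using inD by blast
    have "Z = snd (proj n v Y)" using vY(2)[symmetric] by simp
    moreover have "Y \<subseteq> {..<Suc n}" using Dp[OF vY(1)] by blast
    ultimately have "card Y \<le> Suc (card Z)" using proj_props(3)[OF n, of Y v] by simp
    then show "\<exists>(v, Y)\<in>D'. card Y \<le> Suc (card Z)" using vY(1) by blast
  qed
  show "stanley_decomp n I J D"
    unfolding stanley_decomp_def
  proof (intro conjI ballI impI)
    have "finite {(v, Y)\<in>D'. pcond n v Y}" by (rule finite_subset[OF _ finD]) auto
    then show "finite D" unfolding D_def by (rule finite_imageI)
  next
    fix p assume "p \<in> D"
    then obtain u Z where p: "p = (u, Z)" "(u, Z) \<in> D" by (cases p) auto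
    then obtain v Y where vY: "(v, Y) \<in> D'" "pcond n v Y" "(u, Z) = proj n v Y" using inD by blast
    have Yp: "Y \<subseteq> {..<Suc n}" "v \<in> monoms (Suc n)" using Dp[OF vY(1)] by auto
    have Zn: "Z \<subseteq> {..<n}" "u \<in> monoms n" using proj_props(1,2)[OF n Yp(1), of v] vY(3)[symmetric] by simp_all
    have cs: "cone u Z \<subseteq> I - J"
    proof
      fix w assume w: "w \<in> cone u Z"
      then have "w \<in> monoms n" "subst_last n w \<in> cone v Y" using key[OF vY] by auto
      then show "w \<in> I - J" using Dun vY(1) phiIJ by blast
    qed
    have "u \<in> cone u Z" by (rule cone_self)
    then show "case p of (u, Z) \<Rightarrow> Z \<subseteq> {..<n} \<and> u \<in> monoms n \<and> u \<in> I \<and> u \<notin> J \<and> cone u Z \<inter> J = {}"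
      unfolding p(1) using cs Zn by blast
  next
    fix p q assume pq: "p \<in> D" "q \<in> D" "p \<noteq> q"
    obtain u Z where p: "p = (u, Z)" by (cases p)
    obtain u' Z' where q: "q = (u', Z')" by (cases q)
    obtain v Y where vY: "(v, Y) \<in> D'" "pcond n v Y" "(u, Z) = proj n v Y" using inD pq(1) p by blast
    obtain v' Y' where vY': "(v', Y') \<in> D'" "pcond n v' Y'" "(u', Z') = proj n v' Y'" using inD pq(2) q by blast
    have ne: "(v, Y) \<noteq> (v', Y')" using pq(3) vY(3) vY'(3) p q by auto
    have "cone v Y \<inter> cone v' Y' = {}" using Ddisj[OF vY(1) vY'(1) ne] by simp
    then show "cone (fst p) (snd p) \<inter> cone (fst q) (snd q) = {}"
      using key[OF vY] key[OF vY'] unfolding p q by auto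
  next
    show "(\<Union>(u, Z)\<in>D. cone u Z) = I - J"
    proof
      show "(\<Union>(u, Z)\<in>D. cone u Z) \<subseteq> I - J"
      proof clarify
        fix u Z w assume uZ: "(u, Z) \<in> D" and w: "w \<in> cone u Z"
        then obtain v Y where vY: "(v, Y) \<in> D'" "pcond n v Y" "(u, Z) = proj n v Y" using inD by blast
        have "w \<in> monoms n" "subst_last n w \<in> cone v Y" using key[OF vY] w by auto
        then show "w \<in> I - J" using Dun vY(1) phiIJ by blast
      qed
      show "I - J \<subseteq> (\<Union>(u, Z)\<in>D. cone u Z)"
      proof
        fix w assume w: "w \<in> I - J"
        then have wm: "w \<in> monoms n" using Im by auto
        then have "subst_last n w \<in> ?I' - ?J'" using phiIJ w by blast
        then obtain v Y where vY: "(v, Y) \<in> D'" "subst_last n w \<in> cone v Y" using Dun by blast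
        have Yp: "Y \<subseteq> {..<Suc n}" "v \<in> monoms (Suc n)" using Dp[OF vY(1)] by auto
        have pc: "pcond n v Y" using proj_cone[OF n Yp(2) Yp(1) wm] vY(2) by blast
        have "(v, Y) \<in> {(v, Y)\<in>D'. pcond n v Y}" using vY(1) pc by simp
        then have inD2: "proj n v Y \<in> D" unfolding D_def by (rule rev_image_eqI) simp
        have "w \<in> cone (fst (proj n v Y)) (snd (proj n v Y))" using proj_cone[OF n Yp(2) Yp(1) wm] vY(2) by blast
        then show "w \<in> (\<Union>(u, Z)\<in>D. cone u Z)" using inD2
          by (intro UN_I[of "proj n v Y"]) (simp_all add: case_prod_beta)
      qed
    qed
  qed
qed

lemma decomp_nonempty:
  assumes "stanley_decomp m I J D" "I - J \<noteq> {}"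
  shows "D \<noteq> {}" "finite D"
  using assms unfolding stanley_decomp_def by auto

lemma depth_le:
  assumes "stanley_decomp m I J D" "I - J \<noteq> {}"
  shows "sdecomp_depth D \<le> m"
proof -
  have ne: "D \<noteq> {}" "finite D" using decomp_nonempty[OF assms] by auto
  have "sdecomp_depth D \<in> (\<lambda>(u, Z). card Z) ` D" unfolding sdecomp_depth_def
    using ne by (intro Min_in) auto
  then obtain u Z where uZ: "(u, Z) \<in> D" "sdecomp_depth D = card Z" by auto
  have "Z \<subseteq> {..<m}" using assms(1) uZ(1) unfolding stanley_decomp_def by blast
  then have "card Z \<le> m" using card_mono[of "{..<m}" Z] by simp
  then show ?thesis using uZ by simp
qed

lemma depth_ge:
  assumes "finite D" "D \<noteq> {}" "\<And>u Z. (u, Z) \<in> D \<Longrightarrow> k \<le> card Z"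
  shows "k \<le> sdecomp_depth D"
  unfolding sdecomp_depth_def using assms by (subst Min_ge_iff) auto

lemma depth_le_elem:
  assumes "finite D" "(u, Z) \<in> D"
  shows "sdecomp_depth D \<le> card Z"
  unfolding sdecomp_depth_def using assms by (intro Min_le) force+

theorem proposition5p2:
  fixes n :: nat and I J :: "mon set"
  assumes "n \<ge> 1"
    and "mon_ideal n I" and "mon_ideal n J"
    and "J \<subset> I"
  shows "sdepth (Suc n) (lift_ideal n I) (lift_ideal n J) = sdepth n I J + 1"
proof -
  note n = assms(1) and I = assms(2) and J = assms(3)
  let ?I' = "lift_ideal n I" and ?J' = "lift_ideal n J"
  obtain a where a: "a \<in> I - J" using assms(4) by blast
  have IJne: "I - J \<noteq> {}" using a by blast
  have am: "a \<in> monoms n" using a I by (auto simp: mon_ideal_def)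
  have "subst_last n a \<in> ?I' - ?J'"
    unfolding lift_char[OF n I] lift_char[OF n J] using a psi_subst_last[OF n am] subst_last_monoms[OF n am] by auto
  then have IJne': "?I' - ?J' \<noteq> {}" by blast
  define S where "S = {sdecomp_depth D | D. stanley_decomp n I J D}"
  define S' where "S' = {sdecomp_depth D | D. stanley_decomp (Suc n) ?I' ?J' D}"
  have finS: "finite S" by (rule finite_subset[of _ "{..n}"]) (auto simp: S_def intro: depth_le[OF _ IJne])
  have finS': "finite S'" by (rule finite_subset[of _ "{..Suc n}"]) (auto simp: S'_def intro: depth_le[OF _ IJne'])
  obtain D0 where D0: "stanley_decomp n I J D0" using exists_decomp[OF I J] by blast
  then have "S \<noteq> {}" unfolding S_def by blast
  then have "Max S \<in> S" using finS by (rule Max_in[rotated])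
  then obtain D1 where D1: "stanley_decomp n I J D1" "sdepth n I J = sdecomp_depth D1"
    unfolding S_def sdepth_def by auto
  define D1' where "D1' = (\<Union>(u, Z)\<in>D1. F n u Z)"
  have L1: "stanley_decomp (Suc n) ?I' ?J' D1'" "\<forall>(v, Y)\<in>D1'. \<exists>(u, Z)\<in>D1. card Y = Suc (card Z)"
    using lift_decomp[OF n I J D1(1)] unfolding D1'_def by blast+
  have ne1: "D1 \<noteq> {}" "finite D1" using decomp_nonempty[OF D1(1) IJne] by auto
  have ne1': "D1' \<noteq> {}" "finite D1'" using decomp_nonempty[OF L1(1) IJne'] by auto
  have "Suc (sdecomp_depth D1) \<le> sdecomp_depth D1'"
  proof (rule depth_ge[OF ne1'(2) ne1'(1)])
    fix v Y assume "(v, Y) \<in> D1'"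
    then obtain u Z where "(u, Z) \<in> D1" "card Y = Suc (card Z)" using L1(2) by blast
    then show "Suc (sdecomp_depth D1) \<le> card Y" using depth_le_elem[OF ne1(2)] by fastforce
  qed
  moreover have "sdecomp_depth D1' \<le> Max S'" using L1(1) finS' unfolding S'_def by (intro Max_ge) auto
  ultimately have ge: "sdepth n I J + 1 \<le> sdepth (Suc n) ?I' ?J'" using D1(2) unfolding sdepth_def S'_def by simp
  have "S' \<noteq> {}" using L1(1) unfolding S'_def by blast
  then have "Max S' \<in> S'" using finS' by (rule Max_in[rotated])
  then obtain E' where E': "stanley_decomp (Suc n) ?I' ?J' E'" "sdepth (Suc n) ?I' ?J' = sdecomp_depth E'"
    unfolding S'_def sdepth_def by auto
  define E where "E = (\<lambda>(v, Y). proj n v Y) ` {(v, Y)\<in>E'. pcond n v Y}"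
  have P: "stanley_decomp n I J E" "\<forall>(u, Z)\<in>E. \<exists>(v, Y)\<in>E'. card Y \<le> Suc (card Z)"
    using proj_decomp[OF n I J E'(1)] unfolding E_def by blast+
  have neE: "E \<noteq> {}" "finite E" using decomp_nonempty[OF P(1) IJne] by auto
  have neE': "E' \<noteq> {}" "finite E'" using decomp_nonempty[OF E'(1) IJne'] by auto
  have "sdecomp_depth E \<in> (\<lambda>(u, Z). card Z) ` E" unfolding sdecomp_depth_def
    using neE by (intro Min_in) auto
  then obtain u Z where uZ: "(u, Z) \<in> E" "sdecomp_depth E = card Z" by auto
  then obtain v Y where vY: "(v, Y) \<in> E'" "card Y \<le> Suc (card Z)" using P(2) by blast
  have "sdecomp_depth E' \<le> Suc (sdecomp_depth E)" using depth_le_elem[OF neE'(2) vY(1)] vY(2) uZ(2) by simp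
  moreover have "sdecomp_depth E \<le> Max S" using P(1) finS unfolding S_def by (intro Max_ge) auto
  ultimately have le: "sdepth (Suc n) ?I' ?J' \<le> sdepth n I J + 1" using E'(2) unfolding sdepth_def S_def by simp
  show ?thesis using ge le by simp
qed

end
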